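(* If $d$ and $e$ are degree sequences with the same sum such that $d\succeq e$, then $\Delta_{m(d)}(d)\le \Delta_{m(e)}(e)$.
   Context: Degree sequences (of finite simple graphs, terms may be $0$) are listed in nonincreasing order; sequences of different lengths are compared after padding with zeros. $m(d)=\max\{i : d_i\ge i-1\}$. For integers $k\ge 0$, $\Delta_k(d)=k(k-1)+\sum_{i>k}\min\{k,d_i\}-\sum_{i\le k}d_i$. Majorization (dominance order): for degree sequences $d,e$ with the same sum, $d\succeq e$ means $\sum_{i\le k}d_i\ge\sum_{i\le k}e_i$ for all $k$. *)

theory Defs
  imports Main
begin

text \<open>A finite sequence of naturals is represented as a list; the paper's 1-based
  term d_i is dterm d i, which is 0 for indices beyond the length (padding with zeros).\<close>

definition dterm :: "nat list \<Rightarrow> nat \<Rightarrow> nat" where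
  "dterm d i = (if 1 \<le> i \<and> i \<le> length d then d ! (i - 1) else 0)"

definition is_degree_seq :: "nat list \<Rightarrow> bool" where
  "is_degree_seq d \<longleftrightarrow> sorted_wrt (\<ge>) d \<and>
     (\<exists>E :: nat \<Rightarrow> nat \<Rightarrow> bool.
        (\<forall>i j. E i j \<longrightarrow> E j i) \<and> (\<forall>i. \<not> E i i) \<and>
        (\<forall>i < length d. d ! i = card {j. j < length d \<and> E i j}))"

definition m_index :: "nat list \<Rightarrow> nat" where
  "m_index d = Max {i. 1 \<le> i \<and> i - 1 \<le> dterm d i}"

definition Delta :: "nat \<Rightarrow> nat list \<Rightarrow> int" where
  "Delta k d = int (k * (k - 1)) + (\<Sum>i = k + 1..length d. int (min k (dterm d i)))
               - (\<Sum>i = 1..k. int (dterm d i))"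

definition majorizes :: "nat list \<Rightarrow> nat list \<Rightarrow> bool" where
  "majorizes d e \<longleftrightarrow> (\<forall>k. (\<Sum>i = 1..k. dterm e i) \<le> (\<Sum>i = 1..k. dterm d i))"

end

theory Submission
  imports Defs
begin

lemma dterm_mono:
  assumes "sorted_wrt (\<ge>) d" "1 \<le> i" "i \<le> j"
  shows "dterm d j \<le> dterm d i"
proof (cases "j \<le> length d")
  case True
  then have "d ! (j - 1) \<le> d ! (i - 1)"
    using assms by (cases "i = j") (auto simp: sorted_wrt_iff_nth_less)
  then show ?thesis using True assms by (simp add: dterm_def)
next
  case False
  then show ?thesis by (simp add: dterm_def)
qed

lemma prefix_sum: "(\<Sum>i = 1..n. dterm d i) = (\<Sum>i<min n (length d). d ! i)"
proof (induction n)
  case 0 then show ?case by simp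
next
  case (Suc n)
  have "(\<Sum>i = 1..Suc n. dterm d i) = (\<Sum>i = 1..n. dterm d i) + dterm d (Suc n)"
    by simp
  moreover have "dterm d (Suc n) = (if Suc n \<le> length d then d ! n else 0)"
    by (simp add: dterm_def)
  moreover have "(\<Sum>i<min (Suc n) (length d). d ! i) = (\<Sum>i<min n (length d). d ! i)
      + (if Suc n \<le> length d then d ! n else 0)"
    by (cases "Suc n \<le> length d"; cases "n = length d") (auto simp: min_def)
  ultimately show ?case using Suc by simp
qed

lemma total_sum: "sum_list d = (\<Sum>i = 1..length d. dterm d i)"
proof -
  have "sum_list d = (\<Sum>i<length d. d ! i)"
    by (simp add: sum_list_sum_nth lessThan_atLeast0)
  then show ?thesis using prefix_sum[of d "length d"] by simp
qed

lemma split_sum: "sum_list d = (\<Sum>i = 1..n. dterm d i) + (\<Sum>i = n+1..length d. dterm d i)"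
proof (cases "n \<le> length d")
  case True
  have "(\<Sum>i = 1..n + (length d - n). dterm d i) = (\<Sum>i = 1..n. dterm d i) + (\<Sum>i = n+1..n + (length d - n). dterm d i)"
    by (rule sum.ub_add_nat) simp
  then show ?thesis using True total_sum[of d] by simp
next
  case False
  have "(\<Sum>i = 1..n. dterm d i) = (\<Sum>i<length d. d ! i)"
    using False prefix_sum[of d n] by (simp add: min_def)
  moreover have "sum_list d = (\<Sum>i<length d. d ! i)"
    by (simp add: sum_list_sum_nth lessThan_atLeast0)
  ultimately show ?thesis using False by simp
qed

definition hh :: "nat list \<Rightarrow> nat \<Rightarrow> int" where
  "hh d k = int (k * (k - 1)) + int (sum_list d) - 2 * int (\<Sum>i = 1..k. dterm d i)"

lemma hh_step: "hh d (Suc k) = hh d k + 2 * int k - 2 * int (dterm d (Suc k))"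
proof -
  have "int (Suc k * (Suc k - 1)) = int (k * (k - 1)) + 2 * int k"
    by (cases k) (auto simp: algebra_simps)
  then show ?thesis by (simp add: hh_def algebra_simps)
qed

lemma m_set_fin: "finite {i. 1 \<le> i \<and> i - 1 \<le> dterm d i}"
proof -
  have "{i. 1 \<le> i \<and> i - 1 \<le> dterm d i} \<subseteq> {0..length d + 1}"
    by (auto simp: dterm_def split: if_splits)
  then show ?thesis by (rule finite_subset) simp
qed

lemma m_props:
  shows "1 \<le> m_index d" "m_index d - 1 \<le> dterm d (m_index d)"
    "dterm d (m_index d + 1) < m_index d"
proof -
  let ?S = "{i. 1 \<le> i \<and> i - 1 \<le> dterm d i}"
  have "1 \<in> ?S" by simp
  then have ne: "?S \<noteq> {}" by blast
  have "m_index d \<in> ?S" unfolding m_index_def using Max_in[OF m_set_fin ne] by simp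
  then show "1 \<le> m_index d" "m_index d - 1 \<le> dterm d (m_index d)" by auto
  show "dterm d (m_index d + 1) < m_index d"
  proof (rule ccontr)
    assume "\<not> ?thesis"
    then have "m_index d + 1 \<in> ?S" by simp
    then have "m_index d + 1 \<le> m_index d" unfolding m_index_def
      using Max_ge[OF m_set_fin] by blast
    then show False by simp
  qed
qed

lemma Delta_m: assumes "sorted_wrt (\<ge>) d"
  shows "Delta (m_index d) d = hh d (m_index d)"
proof -
  let ?m = "m_index d"
  have "\<forall>i \<in> {?m+1..length d}. min ?m (dterm d i) = dterm d i"
  proof
    fix i assume "i \<in> {?m+1..length d}"
    then have "dterm d i \<le> dterm d (?m+1)" using dterm_mono[OF assms, of "?m+1" i] by simp
    then show "min ?m (dterm d i) = dterm d i" using m_props(3)[of d] by simp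
  qed
  then have "(\<Sum>i = ?m + 1..length d. int (min ?m (dterm d i))) = int (\<Sum>i = ?m + 1..length d. dterm d i)"
    by simp
  moreover have "int (sum_list d) = int (\<Sum>i = 1..?m. dterm d i) + int (\<Sum>i = ?m + 1..length d. dterm d i)"
    using split_sum[of d ?m] by simp
  ultimately show ?thesis unfolding Delta_def hh_def by simp
qed

lemma hh_min: assumes "sorted_wrt (\<ge>) d"
  shows "hh d (m_index d) \<le> hh d k"
proof (cases "m_index d \<le> k")
  case True
  then show ?thesis
  proof (induction k rule: dec_induct)
    case base then show ?case by simp
  next
    case (step k)
    have "dterm d (Suc k) \<le> dterm d (m_index d + 1)"
      using dterm_mono[OF assms, of "m_index d + 1" "Suc k"] step by simp
    then have "dterm d (Suc k) \<le> k" using m_props(3)[of d] step by simp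
    then show ?case using step hh_step[of d k] by simp
  qed
next
  case False
  then have "k \<le> m_index d" by simp
  then show ?thesis
  proof (induction k rule: inc_induct)
    case base then show ?case by simp
  next
    case (step k)
    have "dterm d (m_index d) \<le> dterm d (Suc k)"
      using dterm_mono[OF assms, of "Suc k" "m_index d"] step by simp
    then have "k \<le> dterm d (Suc k)" using m_props(2)[of d] step by simp
    then show ?case using step hh_step[of d k] by simp
  qed
qed

theorem lemma15:
  assumes "is_degree_seq d" and "is_degree_seq e"
    and "sum_list d = sum_list e"
    and "majorizes d e"
  shows "Delta (m_index d) d \<le> Delta (m_index e) e"
proof -
  have sd: "sorted_wrt (\<ge>) d" and se: "sorted_wrt (\<ge>) e"
    using assms(1,2) by (auto simp: is_degree_seq_def)
  have "Delta (m_index d) d = hh d (m_index d)" using Delta_m[OF sd] .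
  also have "\<dots> \<le> hh d (m_index e)" using hh_min[OF sd] .
  also have "\<dots> \<le> hh e (m_index e)"
    using assms(3,4) unfolding hh_def majorizes_def
    by (smt (verit) of_nat_le_iff)
  also have "\<dots> = Delta (m_index e) e" using Delta_m[OF se] by simp
  finally show ?thesis .
qed

end
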